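(* Let $n\ge 6$ be even, and let $r=(s_1,\dots,s_n)$ be a Latin row of length $n$ such that $\mathrm{dist}(s_j,s_{j+1})\ge \frac n2-1$ for all $1\le j\le n-1$ and $\mathrm{dist}(s_n,s_1)\ge\frac n2-1$. Let $d_*=(\epsilon_1,\dots,\epsilon_{n-1},h)$ be its extended difference row. Then $d_*$ is a rotation of \[(\underbrace{1,\dots,1}_{\frac n2-1},0,\underbrace{-1,\dots,-1}_{\frac n2-1},0),\] or $d_*=\pm(1,1,\dots,1)$. Moreover, the number of such rows $r$ with $s_1=1$ is $n+2$ if $n\equiv 0\pmod 4$ and $n$ if $n\equiv 2\pmod 4$.
   Context: Symbols are $[1,n]$. For $a,b\in[1,n]$, $\mathrm{dist}(a,b)$ is the minimum of the residues of $a-b$ and $b-a$ modulo $n$ (in $[0,n-1]$). A Latin row of length $n$ is a permutation $(s_1,\dots,s_n)$ of $[1,n]$. Its extended difference row is $d_*=(\epsilon_1,\dots,\epsilon_{n-1},h)$ where, with $h_j\in[0,n-1]$, $h_j\equiv s_{j+1}-s_j\pmod n$ for $1\le j\le n-1$ and $h_n\equiv s_1-s_n\pmod n$, one sets $\epsilon_j=h_j-\frac n2$ and $h=h_n-\frac n2$ (integers, not reduced mod $n$). Writing $\epsilon_n=h$, the rotation by 1 of $d_*$ is $(\epsilon_n,\epsilon_1,\dots,\epsilon_{n-1})$; the rotations of $d_*$ are the results of applying this cyclic shift $1,2,\dots,n$ times. *)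

theory Defs
  imports Main
begin

text \<open>A Latin row of length n: list (s_1,...,s_n) (0-based list indices) that is a
permutation of 1..n.\<close>
definition latin_row :: "nat \<Rightarrow> int list \<Rightarrow> bool" where
  "latin_row n xs \<longleftrightarrow> length xs = n \<and> distinct xs \<and> set xs = {1..int n}"

definition cdist :: "nat \<Rightarrow> int \<Rightarrow> int \<Rightarrow> int" where
  "cdist n a b = min ((a - b) mod int n) ((b - a) mod int n)"

definition dist_ok :: "nat \<Rightarrow> int list \<Rightarrow> bool" where
  "dist_ok n xs \<longleftrightarrow>
     (\<forall>i < n. cdist n (xs ! i) (xs ! ((i + 1) mod n)) \<ge> int n div 2 - 1)"

text \<open>Extended difference row (eps_1,...,eps_(n-1),h), eps_j = h_j - n/2,
  h_j = (s_(j+1) - s_j) mod n, h_n = (s_1 - s_n) mod n (n even).\<close>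
definition ext_diff_row :: "nat \<Rightarrow> int list \<Rightarrow> int list" where
  "ext_diff_row n xs =
     map (\<lambda>i. (xs ! ((i + 1) mod n) - xs ! i) mod int n - int n div 2) [0..<n]"

definition rot1 :: "'a list \<Rightarrow> 'a list" where
  "rot1 xs = (if xs = [] then [] else last xs # butlast xs)"

definition is_rotation_of :: "'a list \<Rightarrow> 'a list \<Rightarrow> bool" where
  "is_rotation_of d p \<longleftrightarrow> (\<exists>k \<in> {1..length p}. d = (rot1 ^^ k) p)"

definition zigzag_pattern :: "nat \<Rightarrow> int list" where
  "zigzag_pattern n =
     replicate (n div 2 - 1) 1 @ [0] @ replicate (n div 2 - 1) (-1) @ [0]"

end

theory Submission imports Defs begin

fun Ew :: "(nat \<Rightarrow> int) \<Rightarrow> nat \<Rightarrow> int" where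
  "Ew e 0 = 0"
| "Ew e (Suc i) = Ew e i + e i"

lemma Ew_add_period:
  assumes "\<And>i. e (i + n) = e i"
  shows "Ew e (i + n) = Ew e i + Ew e n"
proof (induction i)
  case 0 then show ?case by simp
next
  case (Suc i)
  have "Ew e (Suc i + n) = Ew e (i + n) + e (i + n)" by simp
  then show ?case using Suc assms by simp
qed

lemma Ew_shift:
  "Ew (\<lambda>i. e (i + r)) l = Ew e (l + r) - Ew e r"
  by (induction l) (simp_all add: add.commute)

lemma Ew_bound:
  assumes "\<And>i. \<bar>e i\<bar> \<le> 1" "a \<le> b"
  shows "\<bar>Ew e b - Ew e a\<bar> \<le> int (b - a)"
  using assms(2)
proof (induction b)
  case 0 then show ?case by simp
next
  case (Suc b)
  show ?case
  proof (cases "a = Suc b")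
    case True then show ?thesis by simp
  next
    case False
    then have "a \<le> b" using Suc by simp
    with Suc.IH have "\<bar>Ew e b - Ew e a\<bar> \<le> int (b - a)" by simp
    moreover have "\<bar>e b\<bar> \<le> 1" using assms(1) by simp
    ultimately show ?thesis using \<open>a \<le> b\<close> by (simp add: Suc_diff_le)
  qed
qed

lemma Ew_up:
  assumes "\<And>i. \<bar>e i\<bar> \<le> 1" "a \<le> b" "Ew e b - Ew e a = int (b - a)"
    "a \<le> i" "i < b"
  shows "e i = 1"
  using assms(2-5)
proof (induction b)
  case 0 then show ?case by simp
next
  case (Suc b)
  have ab: "a \<le> b" using Suc by simp
  have B: "\<bar>Ew e b - Ew e a\<bar> \<le> int (b - a)" using Ew_bound[OF assms(1) ab] .
  have eb: "\<bar>e b\<bar> \<le> 1" using assms(1) by simp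
  have eq: "Ew e b - Ew e a + e b = int (b - a) + 1"
    using Suc.prems(2) ab by (simp add: Suc_diff_le)
  then have "e b = 1" "Ew e b - Ew e a = int (b - a)" using B eb by linarith+
  then show ?case using Suc ab by (cases "i = b") auto
qed

lemma Ew_down:
  assumes "\<And>i. \<bar>e i\<bar> \<le> 1" "a \<le> b" "Ew e b - Ew e a = - int (b - a)"
    "a \<le> i" "i < b"
  shows "e i = -1"
  using assms(2-5)
proof (induction b)
  case 0 then show ?case by simp
next
  case (Suc b)
  have ab: "a \<le> b" using Suc by simp
  have B: "\<bar>Ew e b - Ew e a\<bar> \<le> int (b - a)" using Ew_bound[OF assms(1) ab] .
  have eb: "\<bar>e b\<bar> \<le> 1" using assms(1) by simp
  have eq: "Ew e b - Ew e a + e b = - int (b - a) - 1"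
    using Suc.prems(2) ab by (simp add: Suc_diff_le)
  then have "e b = -1" "Ew e b - Ew e a = - int (b - a)" using B eb by linarith+
  then show ?case using Suc ab by (cases "i = b") auto
qed

lemma ivt_up:
  fixes f :: "nat \<Rightarrow> int"
  assumes "\<And>i. \<bar>f (Suc i) - f i\<bar> \<le> 1" "a \<le> b" "f a \<le> v" "v \<le> f b"
  shows "\<exists>i\<in>{a..b}. f i = v"
  using assms(2-4)
proof (induction b)
  case 0 then show ?case by auto
next
  case (Suc b)
  show ?case
  proof (cases "a = Suc b")
    case True then show ?thesis using Suc by auto
  next
    case False
    then have ab: "a \<le> b" using Suc by simp
    show ?thesis
    proof (cases "v \<le> f b")
      case True
      then obtain i where "i \<in> {a..b}" "f i = v" using Suc.IH ab Suc.prems by auto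
      then show ?thesis by auto
    next
      case False
      then have "f (Suc b) = v" using Suc.prems assms(1)[of b] by linarith
      then show ?thesis using Suc.prems by auto
    qed
  qed
qed

lemma ivt_down:
  fixes f :: "nat \<Rightarrow> int"
  assumes "\<And>i. \<bar>f (Suc i) - f i\<bar> \<le> 1" "a \<le> b" "f b \<le> v" "v \<le> f a"
  shows "\<exists>i\<in>{a..b}. f i = v"
proof -
  have "\<exists>i\<in>{a..b}. - f i = - v"
    using ivt_up[of "\<lambda>i. - f i" a b "-v"] assms by (simp add: abs_minus_commute)
  then show ?thesis by auto
qed

definition zz :: "nat \<Rightarrow> nat \<Rightarrow> int" where
  "zz n i = (if i < n div 2 - 1 then 1 else if i = n div 2 - 1 then 0
             else if i < n - 1 then -1 else 0)"

lemma classify_zero: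
  fixes e :: "nat \<Rightarrow> int" and n :: nat
  assumes n6: "n \<ge> 6" and ev: "even n"
  and per: "\<And>i. e (i + n) = e i"
  and eb: "\<And>i. \<bar>e i\<bar> \<le> 1"
  and T0: "Ew e n = 0"
  and D: "\<And>j l. j < l \<Longrightarrow> l < j + n \<Longrightarrow> even (l - j) \<Longrightarrow> Ew e j \<noteq> Ew e l"
  shows "\<exists>p. \<forall>i<n. e (p + 1 + i) = zz n i"
proof -
  define E where "E = Ew e"
  have Eper: "E (i + n) = E i" for i
    using Ew_add_period[of e n i] per T0 by (simp add: E_def)
  have Ec: "E (a + c * n) = E a" for a c
  proof (induction c)
    case 0 then show ?case by simp
  next
    case (Suc c)
    have "E (a + Suc c * n) = E ((a + c * n) + n)" by (simp add: algebra_simps)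
    then show ?case using Eper Suc by simp
  qed
  have Emod: "E i = E (i mod n)" for i
    using Ec[of "i mod n" "i div n"] by simp
  have step: "\<bar>E (Suc i) - E i\<bar> \<le> 1" for i using eb[of i] by (simp add: E_def)
  have D': "E j \<noteq> E l" if "j < l" "l < j + n" "even (l - j)" for j l
    using D that by (simp add: E_def)
  have three: False if "i < j" "j < l" "l < i + n" "E i = v" "E j = v" "E l = v" for i j l v
  proof -
    have "even (j - i) \<or> even (l - j) \<or> even (l - i)" using that(1,2) by presburger
    then show False using D'[of i j] D'[of j l] D'[of i l] that by auto
  qed
  define m where "m = Min (E ` {..<n})"
  define M where "M = Max (E ` {..<n})"
  have "0 \<in> {..<n}" using n6 by simp
  then have nne: "E ` {..<n} \<noteq> {}" by blast
  have mle: "m \<le> E i" for i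
  proof -
    have "i mod n < n" using n6 by simp
    then have "E (i mod n) \<in> E ` {..<n}" by blast
    then show ?thesis using Emod[of i] unfolding m_def by simp
  qed
  have Mge: "E i \<le> M" for i
  proof -
    have "i mod n < n" using n6 by simp
    then have "E (i mod n) \<in> E ` {..<n}" by blast
    then show ?thesis using Emod[of i] unfolding M_def by simp
  qed
  obtain p0 where "E p0 = m"
    using Min_in[OF _ nne] unfolding m_def by auto
  obtain q0 where "E q0 = M"
    using Max_in[OF _ nne] unfolding M_def by auto
  have "\<exists>p. E p = m \<and> E (Suc p) = m"
  proof (rule ccontr)
    assume C: "\<not> ?thesis"
    let ?P = "p0 + n"
    have EP: "E ?P = m" using Eper \<open>E p0 = m\<close> by simp
    have "E (Suc ?P) \<noteq> m" using C EP by blast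
    then have a: "E (Suc ?P) = m + 1" using mle[of "Suc ?P"] step[of ?P] EP by linarith
    have Pp: "Suc (?P - 1) = ?P" using n6 by simp
    have "E (?P - 1) \<noteq> m" using C EP Pp by metis
    then have b: "E (?P - 1) = m + 1" using mle[of "?P - 1"] step[of "?P - 1"] EP Pp by simp
    have "E (?P - 1) \<noteq> E (Suc ?P)" using D'[of "?P - 1" "Suc ?P"] n6 by simp
    then show False using a b by simp
  qed
  then obtain p where p: "E p = m" "E (Suc p) = m" by blast
  have "\<exists>q. E q = M \<and> E (Suc q) = M"
  proof (rule ccontr)
    assume C: "\<not> ?thesis"
    let ?P = "q0 + n"
    have EP: "E ?P = M" using Eper \<open>E q0 = M\<close> by simp
    have "E (Suc ?P) \<noteq> M" using C EP by blast
    then have a: "E (Suc ?P) = M - 1" using Mge[of "Suc ?P"] step[of ?P] EP by linarith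
    have Pp: "Suc (?P - 1) = ?P" using n6 by simp
    have "E (?P - 1) \<noteq> M" using C EP Pp by metis
    then have b: "E (?P - 1) = M - 1" using Mge[of "?P - 1"] step[of "?P - 1"] EP Pp by simp
    have "E (?P - 1) \<noteq> E (Suc ?P)" using D'[of "?P - 1" "Suc ?P"] n6 by simp
    then show False using a b by simp
  qed
  then obtain q' where q': "E q' = M" "E (Suc q') = M" by blast
  have mM: "m < M"
  proof -
    have "E 0 \<noteq> E 2" using D'[of 0 2] n6 by simp
    then show ?thesis using mle[of 0] Mge[of 0] mle[of 2] Mge[of 2] by linarith
  qed
  define r where "r = (q' + n * p - p) mod n"
  define q where "q = p + r"
  have rn: "r < n" using n6 by (simp add: r_def)
  have "q mod n = q' mod n"
  proof -
    have "p \<le> n * p" using n6 by simp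
    then have "p + (q' + n * p - p) = q' + n * p" by linarith
    then have "(p + (q' + n * p - p)) mod n = q' mod n" by simp
    then show ?thesis unfolding q_def r_def by (simp add: mod_add_right_eq)
  qed
  moreover then have "(q + 1) mod n = (q' + 1) mod n" by (metis mod_add_left_eq)
  ultimately have qq: "E q = M" "E (Suc q) = M"
    using q' Emod[of q] Emod[of q'] Emod[of "Suc q"] Emod[of "Suc q'"]
    by simp_all
  have r0: "r \<noteq> 0"
  proof
    assume "r = 0" then have "q = p" using q_def by simp
    then show False using qq p mM by simp
  qed
  have r1: "r \<noteq> 1"
  proof
    assume "r = 1" then have "q = Suc p" using q_def by simp
    then show False using qq p mM by simp
  qed
  have r2: "r \<noteq> n - 1"
  proof
    assume "r = n - 1"
    then have "Suc q = p + n" using n6 q_def by simp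
    then have "E (Suc q) = m" using Eper p by simp
    then show False using qq mM by simp
  qed
  have r2': "2 \<le> r" "r \<le> n - 2" using r0 r1 r2 rn by auto
  define A where "A = {p+2..<q}"
  define B where "B = {q+2..<p+n}"
  have EA: "E i \<in> {m<..<M}" if "i \<in> A" for i
  proof -
    have i: "p + 2 \<le> i" "i < q" using that A_def by auto
    have "E i \<noteq> m" using three[of p "Suc p" i m] p i q_def r2' rn by auto
    moreover have "E i \<noteq> M" using three[of i q "Suc q" M] qq i q_def r2' rn by auto
    ultimately show ?thesis using mle[of i] Mge[of i] by auto
  qed
  have EB: "E i \<in> {m<..<M}" if "i \<in> B" for i
  proof -
    have i: "q + 2 \<le> i" "i < p + n" using that B_def by auto
    have "E i \<noteq> m" using three[of p "Suc p" i m] p i q_def r2' rn by auto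
    moreover have "E i \<noteq> M" using three[of q "Suc q" i M] qq i q_def r2' rn by auto
    ultimately show ?thesis using mle[of i] Mge[of i] by auto
  qed
  have SA: "\<exists>i\<in>A. E i = v" if vin: "v \<in> {m<..<M}" for v
  proof -
    obtain i where i: "i \<in> {Suc p..q}" "E i = v"
      using ivt_up[of E "Suc p" q v, OF step] vin p qq q_def r2' rn by auto
    then have "i \<noteq> Suc p" "i \<noteq> q" using p qq vin by auto
    then show ?thesis using i A_def by auto
  qed
  have SB: "\<exists>i\<in>B. E i = v" if vin: "v \<in> {m<..<M}" for v
  proof -
    have Epn: "E (p + n) = m" using Eper p by simp
    obtain i where i: "i \<in> {Suc q..p+n}" "E i = v"
      using ivt_down[of E "Suc q" "p + n" v, OF step] vin Epn qq q_def r2' rn by auto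
    then have "i \<noteq> Suc q" "i \<noteq> p + n" using Epn qq vin by auto
    then show ?thesis using i B_def by auto
  qed
  have injA: "inj_on E A"
  proof (rule inj_onI)
    fix i j assume ij: "i \<in> A" "j \<in> A" "E i = E j"
    show "i = j"
    proof (rule ccontr)
      assume "i \<noteq> j"
      then have "i < j \<or> j < i" by auto
      moreover obtain l where l: "l \<in> B" "E l = E i" using SB EA ij(1) by blast
      moreover have "p + 2 \<le> i" "i < q" "p + 2 \<le> j" "j < q" "q + 2 \<le> l" "l < p + n"
        using ij l A_def B_def by auto
      ultimately show False
        using three[of i j l "E i"] three[of j i l "E i"] ij(3) l(2) by linarith
    qed
  qed
  have injB: "inj_on E B"
  proof (rule inj_onI)
    fix i j assume ij: "i \<in> B" "j \<in> B" "E i = E j"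
    show "i = j"
    proof (rule ccontr)
      assume "i \<noteq> j"
      then have "i < j \<or> j < i" by auto
      moreover obtain l where l: "l \<in> A" "E l = E i" using SA EB ij(1) by blast
      moreover have "q + 2 \<le> i" "i < p + n" "q + 2 \<le> j" "j < p + n" "p + 2 \<le> l" "l < q"
        using ij l A_def B_def by auto
      ultimately show False
        using three[of l i j "E i"] three[of l j i "E i"] ij(3) l(2) by linarith
    qed
  qed
  have imA: "E ` A = {m<..<M}" using EA SA by blast
  have imB: "E ` B = {m<..<M}" using EB SB by blast
  have cA: "card A = card {m<..<M}" using card_image[OF injA] imA by simp
  have cB: "card B = card {m<..<M}" using card_image[OF injB] imB by simp
  have "card A = r - 2" using A_def q_def by simp
  moreover have "card B = n - r - 2" using B_def q_def r2' by simp
  moreover have "card {m<..<M} = nat (M - m - 1)" by simp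
  ultimately have c1: "r - 2 = n - r - 2" and c2: "nat (M - m - 1) = r - 2"
    using cA cB by simp_all
  from c1 r2' have rH: "r = n div 2" by linarith
  from c2 r2' mM have "M - m - 1 = int r - 2" by linarith
  with rH have MmH: "M - m = int (n div 2) - 1" by linarith
  have Ee: "E (Suc i) = E i + e i" for i by (simp add: E_def)
  have eb': "\<And>i. \<bar>e i\<bar> \<le> 1" using eb .
  have up: "e i = 1" if "Suc p \<le> i" "i < q" for i
  proof (rule Ew_up[OF eb', of "Suc p" q])
    show "Suc p \<le> q" using q_def r2' by simp
    show "Ew e q - Ew e (Suc p) = int (q - Suc p)"
      using qq p MmH rH q_def r2' unfolding E_def by simp
  qed (use that in auto)
  have down: "e i = -1" if "Suc q \<le> i" "i < p + n" for i
  proof (rule Ew_down[OF eb', of "Suc q" "p + n"])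
    show "Suc q \<le> p + n" using q_def r2' rn by simp
    have "E (p + n) = m" using Eper p by simp
    moreover have "p + n - Suc q = n div 2 - 1" using q_def rH ev by auto
    ultimately show "Ew e (p + n) - Ew e (Suc q) = - int (p + n - Suc q)"
      using qq MmH rH r2' unfolding E_def by simp
  qed (use that in auto)
  have e0: "e p = 0" using p Ee[of p] by simp
  have e1: "e q = 0" using qq Ee[of q] by simp
  have e2: "e (p + n) = 0" using per[of p] e0 by simp
  have "\<forall>i<n. e (p + 1 + i) = zz n i"
  proof (intro allI impI)
    fix i assume i: "i < n"
    show "e (p + 1 + i) = zz n i"
    proof (cases "i < n div 2 - 1")
      case True then show ?thesis using up[of "p + 1 + i"] q_def rH by (simp add: zz_def)
    next
      case F1: False
      show ?thesis
      proof (cases "i = n div 2 - 1")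
        case True
        then have "p + 1 + i = q" using q_def rH n6 by simp
        then show ?thesis using e1 True by (simp add: zz_def)
      next
        case F2: False
        show ?thesis
        proof (cases "i < n - 1")
          case True then show ?thesis using down[of "p + 1 + i"] q_def rH F1 F2 by (simp add: zz_def)
        next
          case False
          then have "i = n - 1" using i by simp
          then have "p + 1 + i = p + n" using n6 by simp
          then have "e (p + 1 + i) = 0" using e2 by metis
          then show ?thesis using F1 F2 False by (simp add: zz_def)
        qed
      qed
    qed
  qed
  then show ?thesis by blast
qed



lemma Ew_const:
  assumes "\<forall>i<b. e i = c"
  shows "Ew e b = int b * c"
  using assms by (induction b) (auto simp: algebra_simps)

lemma classify:
  fixes e :: "nat \<Rightarrow> int" and n :: nat
  assumes n6: "n \<ge> 6" and ev: "even n"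
  and per: "\<And>i. e (i + n) = e i"
  and eb: "\<And>i. \<bar>e i\<bar> \<le> 1"
  and W: "\<And>j l. j < l \<Longrightarrow> l < j + n \<Longrightarrow>
            \<not> int n dvd (int (l - j) * int (n div 2) + Ew e l - Ew e j)"
  and Td: "int n dvd Ew e n"
  shows "(\<exists>p. \<forall>i<n. e (p + 1 + i) = zz n i)
       \<or> (n mod 4 = 0 \<and> (\<forall>i<n. e i = 1))
       \<or> (n mod 4 = 0 \<and> (\<forall>i<n. e i = -1))"
proof -
  obtain H where H: "n = 2 * H" using ev by blast
  have Hd: "n div 2 = H" using H by simp
  have H3: "H \<ge> 3" using H n6 by simp
  define T where "T = Ew e n"
  have Tb: "\<bar>T\<bar> \<le> int n" using Ew_bound[OF eb, of 0 n] by (simp add: T_def)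
  obtain c where c: "T = int n * c" using Td T_def by (auto elim: dvdE)
  have "\<bar>c\<bar> \<le> 1"
  proof (rule ccontr)
    assume "\<not> \<bar>c\<bar> \<le> 1"
    then have "\<bar>c\<bar> \<ge> 2" by simp
    then have "int n * \<bar>c\<bar> \<ge> int n * 2" using n6 by (intro mult_left_mono) auto
    then show False using Tb c n6 by (simp add: abs_mult)
  qed
  then have "c = 0 \<or> c = 1 \<or> c = -1" by auto
  moreover
  { assume "c = 0"
    then have T0: "Ew e n = 0" using c T_def by simp
    have D: "Ew e j \<noteq> Ew e l" if jl: "j < l" "l < j + n" "even (l - j)" for j l
    proof
      assume eq: "Ew e j = Ew e l"
      obtain t where t: "l - j = 2 * t" using jl(3) by blast
      have "int (l - j) * int (n div 2) + Ew e l - Ew e j = int n * int t"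
        using eq t H by simp
      then show False using W[OF jl(1,2)] by simp
    qed
    have ?thesis using classify_zero[OF n6 ev per eb T0 D] by blast }
  moreover
  { assume c1: "c = 1"
    have all: "\<forall>i<n. e i = 1"
    proof (intro allI impI)
      fix i assume "i < n"
      then show "e i = 1" using Ew_up[OF eb, where a=0 and b=n and i=i] c c1 T_def by simp
    qed
    have "n mod 4 = 0"
    proof (rule ccontr)
      assume "n mod 4 \<noteq> 0"
      then have "odd H" using H by presburger
      then have "even (H + 1)" by simp
      then obtain u where u: "H + 1 = 2 * u" by blast
      have EH: "Ew e H = int H" using Ew_const[of H e 1] all H by simp
      have "H * H + H = H * (H + 1)" by simp
      also have "\<dots> = n * u" using u H by simp
      finally have "int (H * H + H) = int (n * u)" by simp
      then have "int H * int H + int H = int n * int u" by simp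
      then have "int (H - 0) * int (n div 2) + Ew e H - Ew e 0 = int n * int u"
        using EH Hd by simp
      then show False using W[of 0 H] H H3 by simp
    qed
    then have ?thesis using all by blast }
  moreover
  { assume c1: "c = -1"
    have all: "\<forall>i<n. e i = -1"
    proof (intro allI impI)
      fix i assume "i < n"
      then show "e i = -1" using Ew_down[OF eb, where a=0 and b=n and i=i] c c1 T_def by simp
    qed
    have "n mod 4 = 0"
    proof (rule ccontr)
      assume "n mod 4 \<noteq> 0"
      then have "odd H" using H by presburger
      then have "even (H - 1)" using H3 by simp
      then obtain u where u: "H - 1 = 2 * u" by blast
      have EH: "Ew e H = - int H" using Ew_const[of H e "-1"] all H by simp
      have "H * H - H = H * (H - 1)" by (simp add: algebra_simps)
      also have "\<dots> = n * u" using u H by simp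
      finally have "int (H * H - H) = int (n * u)" by simp
      moreover have "H \<le> H * H" by simp
      ultimately have "int H * int H - int H = int n * int u" by (simp add: of_nat_diff)
      then have "int (H - 0) * int (n div 2) + Ew e H - Ew e 0 = int n * int u"
        using EH Hd by simp
      then show False using W[of 0 H] H H3 by simp
    qed
    then have ?thesis using all by blast }
  ultimately show ?thesis by blast
qed

lemma edr_nth:
  assumes "i < n"
  shows "ext_diff_row n xs ! i = (xs ! ((i + 1) mod n) - xs ! i) mod int n - int n div 2"
  using assms by (simp add: ext_diff_row_def)

lemma edr_len: "length (ext_diff_row n xs) = n" by (simp add: ext_diff_row_def)

lemma latin_val:
  assumes "latin_row n xs" "i < n"
  shows "1 \<le> xs ! i \<and> xs ! i \<le> int n"
proof -
  have "i < length xs" using assms by (simp add: latin_row_def)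
  then have "xs ! i \<in> set xs" by (rule nth_mem)
  then have "xs ! i \<in> {1..int n}" using assms(1) unfolding latin_row_def by blast
  then show ?thesis by simp
qed

lemma latin_ndvd:
  assumes "latin_row n xs" "i < n" "j < n" "i \<noteq> j"
  shows "\<not> int n dvd (xs ! i - xs ! j)"
proof
  assume d: "int n dvd (xs ! i - xs ! j)"
  have ne: "xs ! i \<noteq> xs ! j" using assms by (simp add: latin_row_def nth_eq_iff_index_eq)
  have "int n \<le> \<bar>xs ! i - xs ! j\<bar>" using dvd_imp_le_int[of "xs ! i - xs ! j" "int n"] d ne by simp
  then show False using latin_val[OF assms(1,2)] latin_val[OF assms(1,3)] by linarith
qed

lemma div2_int: "int n div 2 = int (n div 2)" by simp

lemma dist_e:
  assumes n6: "n \<ge> 6" and ev: "even n" and L: "latin_row n xs" and Dk: "dist_ok n xs" and i: "i < n"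
  shows "\<bar>ext_diff_row n xs ! i\<bar> \<le> 1"
proof -
  let ?a = "xs ! i" and ?b = "xs ! ((i + 1) mod n)"
  have i1: "(i + 1) mod n < n" using n6 by simp
  have ne: "(i + 1) mod n \<noteq> i"
  proof (cases "i + 1 < n")
    case True then show ?thesis by simp
  next
    case False then have "i + 1 = n" using i by simp
    then show ?thesis using n6 by simp
  qed
  have nd: "\<not> int n dvd (?b - ?a)" using latin_ndvd[OF L i1 i ne] .
  define h where "h = (?b - ?a) mod int n"
  have h0: "0 \<le> h" "h < int n" using n6 by (simp_all add: h_def)
  have hne: "h \<noteq> 0" using nd by (simp add: h_def dvd_eq_mod_eq_0)
  have h2: "(?a - ?b) mod int n = int n - h"
  proof -
    have "(- (?b - ?a)) mod int n = int n - h" using hne unfolding h_def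
      by (metis zmod_zminus1_eq_if)
    then show ?thesis by simp
  qed
  have "cdist n ?a ?b \<ge> int n div 2 - 1" using Dk i by (simp add: dist_ok_def)
  then have "min (int n - h) h \<ge> int n div 2 - 1" using h2 by (simp add: cdist_def h_def)
  moreover obtain H where H: "n = 2 * H" using ev by blast
  ultimately have "h \<ge> int H - 1" "int n - h \<ge> int H - 1" by auto
  moreover have "ext_diff_row n xs ! i = h - int H" using edr_nth[OF i] H by (simp add: h_def)
  ultimately show ?thesis using H by simp
qed
lemma mod_dvd_diff: "(m::int) dvd (a mod m - a)"
proof -
  have "a mod m - a = m * (- (a div m))" by (simp add: minus_mod_eq_mult_div algebra_simps) 
  then show ?thesis by simp
qed

lemma tele:
  fixes xs :: "int list" and n j t :: nat
  assumes n6: "n \<ge> 6"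
  defines "e \<equiv> (\<lambda>i. ext_diff_row n xs ! (i mod n))"
  shows "int n dvd (xs ! ((j + t) mod n) - xs ! (j mod n)
            - (int t * int (n div 2) + Ew e (j + t) - Ew e j))"
proof (induction t)
  case 0 then show ?case by simp
next
  case (Suc t)
  let ?x = "\<lambda>i. xs ! (i mod n)"
  have lt: "(j + t) mod n < n" using n6 by simp
  have m: "((j + t) mod n + 1) mod n = (j + Suc t) mod n" by (simp add: mod_Suc_eq)
  have ee: "e (j + t) = (?x (j + Suc t) - ?x (j + t)) mod int n - int (n div 2)"
    unfolding e_def using edr_nth[OF lt, of xs] m by simp
  have d1: "int n dvd ((?x (j + Suc t) - ?x (j + t)) mod int n - (?x (j + Suc t) - ?x (j + t)))"
    by (rule mod_dvd_diff)
  have "xs ! ((j + Suc t) mod n) - xs ! (j mod n)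
            - (int (Suc t) * int (n div 2) + Ew e (j + Suc t) - Ew e j)
        = (xs ! ((j + t) mod n) - xs ! (j mod n)
            - (int t * int (n div 2) + Ew e (j + t) - Ew e j))
          - ((?x (j + Suc t) - ?x (j + t)) mod int n - (?x (j + Suc t) - ?x (j + t)))"
    using ee by (simp add: algebra_simps)
  then show ?case using Suc.IH d1 by (metis dvd_diff)
qed
lemma mod_ne_window:
  fixes j l n :: nat
  assumes "j < l" "l < j + n"
  shows "l mod n \<noteq> j mod n"
proof
  assume "l mod n = j mod n"
  then have "n dvd l - j" using assms by (simp add: mod_eq_dvd_iff_nat)
  moreover have "0 < l - j" using assms by simp
  ultimately have "n \<le> l - j" by (simp add: dvd_imp_le)
  then show False using assms by simp
qed

lemma row_classify:
  fixes xs :: "int list" and n :: nat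
  assumes n6: "n \<ge> 6" and ev: "even n" and L: "latin_row n xs" and Dk: "dist_ok n xs"
  shows "(\<exists>p. \<forall>i<n. ext_diff_row n xs ! ((p + 1 + i) mod n) = zz n i)
       \<or> (n mod 4 = 0 \<and> ext_diff_row n xs = replicate n 1)
       \<or> (n mod 4 = 0 \<and> ext_diff_row n xs = replicate n (-1))"
proof -
  define e where "e = (\<lambda>i. ext_diff_row n xs ! (i mod n))"
  have per: "\<And>i. e (i + n) = e i" by (simp add: e_def)
  have eb: "\<And>i. \<bar>e i\<bar> \<le> 1" unfolding e_def using dist_e[OF n6 ev L Dk] n6 by simp
  have W: "\<not> int n dvd (int (l - j) * int (n div 2) + Ew e l - Ew e j)"
    if jl: "j < l" "l < j + n" for j l
  proof
    assume d: "int n dvd (int (l - j) * int (n div 2) + Ew e l - Ew e j)"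
    have t: "int n dvd (xs ! ((j + (l - j)) mod n) - xs ! (j mod n)
            - (int (l - j) * int (n div 2) + Ew e (j + (l - j)) - Ew e j))"
      using tele[OF n6, of xs j "l - j"] unfolding e_def by simp
    have "j + (l - j) = l" using jl by simp
    then have "int n dvd (xs ! (l mod n) - xs ! (j mod n))" using t d
      by (metis dvd_add diff_add_cancel)
    moreover have "\<not> int n dvd (xs ! (l mod n) - xs ! (j mod n))"
      using latin_ndvd[OF L, of "l mod n" "j mod n"] mod_ne_window[OF jl] n6 by simp
    ultimately show False by simp
  qed
  have Td: "int n dvd Ew e n"
  proof -
    have t: "int n dvd (xs ! ((0 + n) mod n) - xs ! (0 mod n)
            - (int n * int (n div 2) + Ew e (0 + n) - Ew e 0))"
      using tele[OF n6, of xs 0 n] unfolding e_def by simp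
    then have "int n dvd - (int n * int (n div 2) + Ew e n)" by simp
    then have "int n dvd (int n * int (n div 2) + Ew e n)" by (simp only: dvd_minus_iff)
    then show ?thesis by (simp add: dvd_add_right_iff)
  qed
  have C: "(\<exists>p. \<forall>i<n. e (p + 1 + i) = zz n i)
       \<or> (n mod 4 = 0 \<and> (\<forall>i<n. e i = 1))
       \<or> (n mod 4 = 0 \<and> (\<forall>i<n. e i = -1))"
    using classify[OF n6 ev per eb W Td] by blast
  have len: "length (ext_diff_row n xs) = n" by (rule edr_len)
  show ?thesis
  proof (rule disjE[OF C])
    assume "\<exists>p. \<forall>i<n. e (p + 1 + i) = zz n i"
    then show ?thesis unfolding e_def by blast
  next
    assume "(n mod 4 = 0 \<and> (\<forall>i<n. e i = 1)) \<or> (n mod 4 = 0 \<and> (\<forall>i<n. e i = -1))"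
    then show ?thesis
    proof
      assume a: "n mod 4 = 0 \<and> (\<forall>i<n. e i = 1)"
      have "ext_diff_row n xs = replicate n 1"
        by (rule nth_equalityI) (use a len in \<open>auto simp: e_def\<close>)
      then show ?thesis using a by blast
    next
      assume a: "n mod 4 = 0 \<and> (\<forall>i<n. e i = -1)"
      have "ext_diff_row n xs = replicate n (-1)"
        by (rule nth_equalityI) (use a len in \<open>auto simp: e_def\<close>)
      then show ?thesis using a by blast
    qed
  qed
qed

lemma rot1_rotate: "rot1 xs = rotate (length xs - 1) xs"
proof (cases "xs = []")
  case True then show ?thesis by (simp add: rot1_def)
next
  case False
  then have xs: "xs = butlast xs @ [last xs]" by simp
  have "rotate (length (butlast xs)) (butlast xs @ [last xs]) = [last xs] @ butlast xs"
    by (rule rotate_append)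
  then show ?thesis using False xs by (simp add: rot1_def)
qed

lemma rot1_pow: "(rot1 ^^ k) xs = rotate (k * (length xs - 1)) xs"
proof (induction k)
  case 0 then show ?case by simp
next
  case (Suc k)
  have "(rot1 ^^ Suc k) xs = rot1 ((rot1 ^^ k) xs)" by simp
  also have "\<dots> = rot1 (rotate (k * (length xs - 1)) xs)" using Suc by simp
  also have "\<dots> = rotate (length xs - 1) (rotate (k * (length xs - 1)) xs)"
    by (simp only: rot1_rotate length_rotate)
  also have "\<dots> = rotate (Suc k * (length xs - 1)) xs" by (simp add: rotate_rotate)
  finally show ?case .
qed

lemma is_rot:
  assumes "r < length z"
  shows "is_rotation_of (rotate r z) z"
proof -
  let ?n = "length z"
  show ?thesis
  proof (cases "r = 0")
    case True
    have "(rot1 ^^ ?n) z = rotate (?n * (?n - 1)) z" by (rule rot1_pow)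
    also have "\<dots> = z" by (simp add: rotate_conv_mod)
    moreover have "?n \<ge> 1" using assms by simp
    ultimately show ?thesis using True unfolding is_rotation_of_def
      by (intro bexI[of _ ?n]) auto
  next
    case False
    let ?k = "?n - r"
    have "?k * (?n - 1) = (?n - r - 1) * ?n + r"
    proof -
      have "int (?k * (?n - 1)) = (int ?n - int r) * (int ?n - 1)" using assms by (simp add: of_nat_diff)
      also have "\<dots> = (int ?n - int r - 1) * int ?n + int r" by (simp add: algebra_simps)
      also have "\<dots> = int ((?n - r - 1) * ?n + r)" using assms by (simp add: of_nat_diff)
      finally show ?thesis by linarith
    qed
    then have "(?k * (?n - 1)) mod ?n = r" using assms by simp
    then have "(rot1 ^^ ?k) z = rotate r z" using rot1_pow[of ?k z]
      by (metis rotate_conv_mod)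
    then show ?thesis using False assms unfolding is_rotation_of_def
      by (intro bexI[of _ ?k]) auto
  qed
qed

lemma zig_len: assumes "n \<ge> 6" "even n" shows "length (zigzag_pattern n) = n"
  using assms by (auto simp: zigzag_pattern_def elim!: evenE)

lemma zig_nth: assumes "n \<ge> 6" "even n" "i < n" shows "zigzag_pattern n ! i = zz n i"
proof -
  obtain H where H: "n = 2 * H" using assms by blast
  have H3: "H \<ge> 3" using H assms by simp
  have z: "zigzag_pattern n = replicate (H - 1) 1 @ [0] @ replicate (H - 1) (-1) @ [0]"
    using H by (simp add: zigzag_pattern_def)
  show ?thesis
  proof (cases "i < H - 1")
    case True then show ?thesis using z H by (simp add: nth_append zz_def)
  next
    case F1: False
    show ?thesis
    proof (cases "i = H - 1")
      case True then show ?thesis using z H by (simp add: nth_append zz_def)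
    next
      case F2: False
      show ?thesis
      proof (cases "i < n - 1")
        case True then show ?thesis using z H F1 F2 by (simp add: nth_append zz_def)
      next
        case False
        then have "i = n - 1" using assms by simp
        then show ?thesis using z H F1 F2 H3 by (simp add: nth_append zz_def)
      qed
    qed
  qed
qed

lemma part1:
  fixes xs :: "int list" and n :: nat
  assumes n6: "n \<ge> 6" and ev: "even n" and L: "latin_row n xs" and Dk: "dist_ok n xs"
  shows "is_rotation_of (ext_diff_row n xs) (zigzag_pattern n)
       \<or> (n mod 4 = 0 \<and> ext_diff_row n xs = replicate n 1)
       \<or> (n mod 4 = 0 \<and> ext_diff_row n xs = replicate n (-1))"
proof -
  have "(\<exists>p. \<forall>i<n. ext_diff_row n xs ! ((p + 1 + i) mod n) = zz n i)
       \<or> (n mod 4 = 0 \<and> ext_diff_row n xs = replicate n 1)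
       \<or> (n mod 4 = 0 \<and> ext_diff_row n xs = replicate n (-1))"
    by (rule row_classify[OF n6 ev L Dk])
  moreover
  { fix p assume p: "\<forall>i<n. ext_diff_row n xs ! ((p + 1 + i) mod n) = zz n i"
    define r where "r = ((n - 1) * (p + 1)) mod n"
    let ?z = "zigzag_pattern n"
    have rn: "r < n" using n6 by (simp add: r_def)
    have "ext_diff_row n xs = rotate r ?z"
    proof (rule nth_equalityI)
      show "length (ext_diff_row n xs) = length (rotate r ?z)"
        using zig_len[OF n6 ev] by (simp add: edr_len)
    next
      fix j assume "j < length (ext_diff_row n xs)"
      then have j: "j < n" by (simp add: edr_len)
      have e1: "(r + j) mod n = ((n - 1) * (p + 1) + j) mod n" by (simp add: r_def mod_add_left_eq)
      have e2: "p + 1 + (n - 1) * (p + 1) = n * (p + 1)" using n6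
        by (cases n) simp_all
      have "(p + 1 + (r + j) mod n) mod n = (p + 1 + ((n - 1) * (p + 1) + j) mod n) mod n"
        using e1 by simp
      also have "\<dots> = (p + 1 + ((n - 1) * (p + 1) + j)) mod n" by (metis mod_add_right_eq)
      also have "p + 1 + ((n - 1) * (p + 1) + j) = n * (p + 1) + j" using e2 by simp
      also have "(n * (p + 1) + j) mod n = j" using j by (metis mod_mult_self3 mod_less mult.commute)
      finally have m: "(p + 1 + (r + j) mod n) mod n = j" .
      have "(r + j) mod n < n" using n6 by simp
      then have "ext_diff_row n xs ! j = zz n ((r + j) mod n)" using p m by metis
      also have "\<dots> = ?z ! ((r + j) mod n)" using zig_nth[OF n6 ev] n6 by simp
      also have "\<dots> = rotate r ?z ! j" using zig_len[OF n6 ev] j by (simp add: nth_rotate)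
      finally show "ext_diff_row n xs ! j = rotate r ?z ! j" .
    qed
    then have "is_rotation_of (ext_diff_row n xs) (zigzag_pattern n)"
      using is_rot[of r ?z] rn zig_len[OF n6 ev] by simp }
  ultimately show ?thesis by blast
qed

lemma dist_from_edr:
  fixes xs :: "int list" and n :: nat
  assumes n6: "n \<ge> 6" and ev: "even n"
    and eb: "\<forall>i<n. \<bar>ext_diff_row n xs ! i\<bar> \<le> 1"
  shows "dist_ok n xs"
  unfolding dist_ok_def
proof (intro allI impI)
  fix i assume i: "i < n"
  obtain H where H: "n = 2 * H" using ev by blast
  let ?a = "xs ! i" and ?b = "xs ! ((i + 1) mod n)"
  define h where "h = (?b - ?a) mod int n"
  have he: "ext_diff_row n xs ! i = h - int H" using edr_nth[OF i] H by (simp add: h_def)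
  then have hb: "int H - 1 \<le> h" "h \<le> int H + 1" using eb i by auto
  have hne: "h \<noteq> 0" using hb H n6 by simp
  have h2: "(?a - ?b) mod int n = int n - h"
  proof -
    have "(- (?b - ?a)) mod int n = int n - h" using hne unfolding h_def
      by (metis zmod_zminus1_eq_if)
    then show ?thesis by simp
  qed
  have "min (int n - h) h \<ge> int H - 1" using hb H by simp
  then show "cdist n ?a ?b \<ge> int n div 2 - 1" using h2 H by (simp add: cdist_def h_def)
qed

lemma construct:
  fixes e :: "nat \<Rightarrow> int" and n :: nat
  assumes n6: "n \<ge> 6" and ev: "even n"
  and per: "\<And>i. e (i + n) = e i"
  and eb: "\<And>i. \<bar>e i\<bar> \<le> 1"
  and W: "\<And>j l. j < l \<Longrightarrow> l < j + n \<Longrightarrow>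
            \<not> int n dvd (int (l - j) * int (n div 2) + Ew e l - Ew e j)"
  and Td: "int n dvd Ew e n"
  defines "xs \<equiv> map (\<lambda>j. (int j * int (n div 2) + Ew e j) mod int n + 1) [0..<n]"
  shows "latin_row n xs \<and> dist_ok n xs \<and> xs ! 0 = 1 \<and> ext_diff_row n xs = map e [0..<n]"
proof -
  obtain H where H: "n = 2 * H" using ev by blast
  have Hd: "n div 2 = H" using H by simp
  have H3: "H \<ge> 3" using H n6 by simp
  define F where "F j = int j * int H + Ew e j" for j
  have xn: "xs ! j = F j mod int n + 1" if "j < n" for j
    using that unfolding xs_def F_def Hd by simp
  have len: "length xs = n" by (simp add: xs_def)
  have x0: "xs ! 0 = 1" using xn[of 0] n6 by (simp add: F_def)
  have ext: "ext_diff_row n xs = map e [0..<n]"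
  proof (rule nth_equalityI)
    show "length (ext_diff_row n xs) = length (map e [0..<n])" by (simp add: edr_len)
  next
    fix i assume "i < length (ext_diff_row n xs)"
    then have i: "i < n" by (simp add: edr_len)
    have rng: "(int H + e i) mod int n = int H + e i"
      using eb[of i] H H3 by (intro mod_pos_pos_trivial) auto
    have diff: "(xs ! ((i + 1) mod n) - xs ! i) mod int n = (F ((i + 1) mod n) - F i) mod int n"
      using xn[of i] xn[of "(i + 1) mod n"] i n6 by (simp add: mod_diff_eq)
    have "(F ((i + 1) mod n) - F i) mod int n = int H + e i"
    proof (cases "i + 1 < n")
      case True
      then have "F ((i + 1) mod n) - F i = int H + e i" by (simp add: F_def algebra_simps)
      then show ?thesis using rng by simp
    next
      case False
      then have i1: "i + 1 = n" using i by simp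
      have Fn: "F n mod int n = 0"
      proof -
        have "int n dvd int n * int H" by simp
        then have "int n dvd F n" using Td unfolding F_def by (simp add: mult.commute dvd_add)
        then show ?thesis by simp
      qed
      have "F (Suc i) = F i + int H + e i" by (simp add: F_def algebra_simps)
      then have "F n = F i + int H + e i" using i1 by simp
      then have "(F 0 - F i) mod int n = (F n - F i - (int H + e i) + (int H + e i) - F n) mod int n"
        by (simp add: F_def)
      also have "\<dots> = (int H + e i - F n) mod int n" using \<open>F n = F i + int H + e i\<close> by simp
      also have "\<dots> = (int H + e i - F n mod int n) mod int n" by (simp add: mod_diff_right_eq)
      also have "\<dots> = int H + e i" using Fn rng by simp
      finally show ?thesis using i1 by simp
    qed
    then show "ext_diff_row n xs ! i = map e [0..<n] ! i"
      using edr_nth[OF i, of xs] diff i Hd by simp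
  qed
  have dk: "dist_ok n xs"
    by (rule dist_from_edr[OF n6 ev]) (use ext eb in auto)
  have dist: "distinct xs"
  proof (subst distinct_conv_nth, intro allI impI)
    fix i j assume ij: "i < length xs" "j < length xs" "i \<noteq> j"
    show "xs ! i \<noteq> xs ! j"
    proof
      assume eq: "xs ! i = xs ! j"
      have key: False if ab: "a < b" "b < n" "xs ! a = xs ! b" for a b
      proof -
        have "F b mod int n = F a mod int n" using ab xn[of a] xn[of b] by simp
        then have "int n dvd (F b - F a)" by (simp add: mod_eq_dvd_iff)
        moreover have "F b - F a = int (b - a) * int (n div 2) + Ew e b - Ew e a"
          using ab Hd by (simp add: F_def of_nat_diff algebra_simps)
        ultimately show False using W[of a b] ab by simp
      qed
      show False
      proof (cases "i < j")
        case True then show False using key[of i j] eq ij len by simp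
      next
        case False then show False using key[of j i] eq ij len by simp
      qed
    qed
  qed
  have sub: "set xs \<subseteq> {1..int n}"
  proof
    fix v assume "v \<in> set xs"
    then obtain j where j: "j < n" "v = xs ! j" using len by (auto simp: in_set_conv_nth)
    have b: "0 \<le> F j mod int n" "F j mod int n < int n" using n6 by simp_all
    have "v = F j mod int n + 1" using j xn[of j] by simp
    with b show "v \<in> {1..int n}" by simp
  qed
  have "card (set xs) = n" using dist len by (simp add: distinct_card)
  then have "set xs = {1..int n}" using sub by (intro card_subset_eq) auto
  then have "latin_row n xs" using len dist by (simp add: latin_row_def)
  then show ?thesis using dk x0 ext by simp
qed

lemma small_ndvd:
  fixes n X :: int
  assumes "X \<noteq> 0" "\<bar>X\<bar> < n"
  shows "\<not> n dvd X"
  using assms dvd_imp_le_int[of X n] by auto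

lemma const_valid:
  fixes n :: nat and c :: int
  assumes n6: "n \<ge> 6" and H: "n = 2 * H" and c: "c = 1 \<or> c = -1"
    and cop: "coprime n (nat (int H + c))"
    and j: "j < l" "l < j + n"
  shows "\<not> int n dvd (int (l - j) * int (n div 2) + Ew (\<lambda>_. c) l - Ew (\<lambda>_. c) j)"
proof
  assume d: "int n dvd (int (l - j) * int (n div 2) + Ew (\<lambda>_. c) l - Ew (\<lambda>_. c) j)"
  have H3: "H \<ge> 3" using n6 H by simp
  have Ec: "Ew (\<lambda>_. c) k = int k * c" for k by (rule Ew_const) simp
  have "int (l - j) * int (n div 2) + Ew (\<lambda>_. c) l - Ew (\<lambda>_. c) j
        = int ((l - j) * nat (int H + c))"
    using j c H3 H by (auto simp: Ec of_nat_diff algebra_simps)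
  then have "n dvd (l - j) * nat (int H + c)" using d by (simp only: of_nat_dvd_iff)
  then have "n dvd (l - j)" using cop by (simp add: coprime_dvd_mult_left_iff)
  moreover have "0 < l - j" using j by simp
  ultimately have "n \<le> l - j" by (simp add: dvd_imp_le)
  then show False using j by simp
qed

lemma zig_valid:
  fixes n :: nat
  assumes n6: "n \<ge> 6" and ev: "even n"
  defines "ez \<equiv> (\<lambda>i. zz n (i mod n))"
  shows "(\<forall>i. ez (i + n) = ez i) \<and> (\<forall>i. \<bar>ez i\<bar> \<le> 1) \<and> Ew ez n = 0
    \<and> (\<forall>j l. j < l \<longrightarrow> l < j + n \<longrightarrow>
            \<not> int n dvd (int (l - j) * int (n div 2) + Ew ez l - Ew ez j))"
proof -
  obtain H where H: "n = 2 * H" using ev by blast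
  have Hd: "n div 2 = H" using H by simp
  have H3: "H \<ge> 3" using H n6 by simp
  define f where "f i = (if i \<le> H - 1 then int i else int n - 1 - int i)" for i
  have per: "ez (i + n) = ez i" for i by (simp add: ez_def)
  have eb: "\<bar>ez i\<bar> \<le> 1" for i by (simp add: ez_def zz_def)
  have Ef: "Ew ez i = f i" if "i < n" for i
    using that
  proof (induction i)
    case 0 then show ?case by (simp add: f_def)
  next
    case (Suc i)
    then have IH: "Ew ez i = f i" by simp
    have "ez i = zz n i" using Suc.prems by (simp add: ez_def)
    then have ez: "ez i = (if i < H - 1 then 1 else if i = H - 1 then 0 else if i < n - 1 then -1 else 0)"
      using Hd by (simp add: zz_def)
    show ?case using IH Suc.prems H H3 ez unfolding f_def by (auto split: if_split_asm)
  qed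
  have En: "Ew ez n = 0"
  proof -
    have "n = Suc (n - 1)" using n6 by simp
    then have "Ew ez n = Ew ez (n - 1) + ez (n - 1)" by (metis Ew.simps(2))
    also have "\<dots> = 0"
    proof -
      have a: "\<not> (n - 1 \<le> H - 1)" "\<not> (n - 1 < H - 1)" "n - 1 \<noteq> H - 1" "(n - 1) mod n = n - 1"
        using H H3 by simp_all
      have "f (n - 1) = 0" using a by (simp add: f_def)
      moreover have "ez (n - 1) = 0" using a Hd by (simp add: ez_def zz_def)
      ultimately show ?thesis using Ef[of "n - 1"] n6 by simp
    qed
    finally show ?thesis .
  qed
  have Eper: "Ew ez (i + n) = Ew ez i" for i
    using Ew_add_period[of ez n i] per En by simp
  have Ec: "Ew ez (a + c * n) = Ew ez a" for a c
  proof (induction c)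
    case 0 then show ?case by simp
  next
    case (Suc c)
    have "Ew ez (a + Suc c * n) = Ew ez ((a + c * n) + n)" by (simp add: algebra_simps)
    then show ?case using Eper Suc by simp
  qed
  have Emod: "Ew ez i = f (i mod n)" for i
    using Ec[of "i mod n" "i div n"] Ef[of "i mod n"] n6 by simp
  have W: "\<not> int n dvd (int (l - j) * int (n div 2) + Ew ez l - Ew ez j)"
    if jl: "j < l" "l < j + n" for j l
  proof
    assume d: "int n dvd (int (l - j) * int (n div 2) + Ew ez l - Ew ez j)"
    define a where "a = j mod n"
    define b where "b = l mod n"
    have ab: "a < n" "b < n" "a \<noteq> b" using mod_ne_window[OF jl] n6 by (auto simp: a_def b_def)
    have decomp: "int (l - j) = (int b - int a) + int n * (int (l div n) - int (j div n))"
    proof -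
      have "l = b + n * (l div n)" "j = a + n * (j div n)" by (simp_all add: a_def b_def)
      then have "int l = int b + int n * int (l div n)" "int j = int a + int n * int (j div n)"
        by (metis of_nat_add of_nat_mult)+
      then show ?thesis using jl by (simp add: of_nat_diff algebra_simps)
    qed
    define X where "X = (int b - int a) * int H + f b - f a"
    have "int (l - j) * int (n div 2) + Ew ez l - Ew ez j
          = X + int n * ((int (l div n) - int (j div n)) * int H)"
    proof -
      have m: "int (l - j) * int H = (int b - int a) * int H + int n * ((int (l div n) - int (j div n)) * int H)"
        unfolding decomp by (simp add: algebra_simps)
      show ?thesis using m Hd Emod[of l] Emod[of j] by (simp add: X_def a_def b_def)
    qed
    then have dX: "int n dvd X" using d by (metis dvd_add_left_iff dvd_triv_left)
    have fb: "0 \<le> f i" "f i \<le> int H - 1" if "i < n" for i using that H by (auto simp: f_def)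
    show False
    proof (cases "even (int b - int a)")
      case True
      then obtain c where c: "int b - int a = 2 * c" by blast
      have "X = (f b - f a) + int n * c" using c H by (simp add: X_def algebra_simps)
      then have d2: "int n dvd (f b - f a)" using dX by (metis dvd_add_left_iff dvd_triv_left)
      have "f b \<noteq> f a"
      proof
        assume "f b = f a"
        then have "b = a \<or> a + b = n - 1" using ab H by (auto simp: f_def split: if_splits)
        then have "a + b = n - 1" using ab by simp
        then have "odd (int b - int a)" using H ab by presburger
        then show False using True by simp
      qed
      moreover have "\<bar>f b - f a\<bar> < int n" using fb[of a] fb[of b] ab H by (simp add: abs_less_iff)
      ultimately show False using small_ndvd[of "f b - f a" "int n"] d2 by auto
    next
      case False
      then obtain c where c: "int b - int a = 2 * c + 1" by (metis oddE)
      have "X = (int H + f b - f a) + int n * c" using c H by (simp add: X_def algebra_simps)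
      then have d2: "int n dvd (int H + f b - f a)" using dX by (metis dvd_add_left_iff dvd_triv_left)
      moreover have "\<bar>int H + f b - f a\<bar> < int n" "int H + f b - f a \<noteq> 0"
        using fb[of a] fb[of b] ab H by (simp_all add: abs_less_iff)
      ultimately show False using small_ndvd[of "int H + f b - f a" "int n"] by auto
    qed
  qed
  show ?thesis using per eb En W by blast
qed

lemma rot_row:
  fixes n r :: nat
  assumes n6: "n \<ge> 6" and ev: "even n" and r: "r < n"
  shows "\<exists>xs. latin_row n xs \<and> dist_ok n xs \<and> xs ! 0 = 1
           \<and> ext_diff_row n xs = rotate r (zigzag_pattern n)"
proof -
  define ez where "ez = (\<lambda>i. zz n (i mod n))"
  have V: "(\<forall>i. ez (i + n) = ez i) \<and> (\<forall>i. \<bar>ez i\<bar> \<le> 1) \<and> Ew ez n = 0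
    \<and> (\<forall>j l. j < l \<longrightarrow> l < j + n \<longrightarrow>
            \<not> int n dvd (int (l - j) * int (n div 2) + Ew ez l - Ew ez j))"
    using zig_valid[OF n6 ev] unfolding ez_def by blast
  define er where "er = (\<lambda>i. ez (i + r))"
  have per: "er (i + n) = er i" for i
  proof -
    have "i + n + r = (i + r) + n" by simp
    then show ?thesis using V unfolding er_def by metis
  qed
  have eb: "\<And>i. \<bar>er i\<bar> \<le> 1" using V by (simp add: er_def)
  have sh: "Ew er l = Ew ez (l + r) - Ew ez r" for l unfolding er_def by (rule Ew_shift)
  have W: "\<not> int n dvd (int (l - j) * int (n div 2) + Ew er l - Ew er j)"
    if jl: "j < l" "l < j + n" for j l
  proof -
    from V have W0: "\<forall>j l. j < l \<longrightarrow> l < j + n \<longrightarrow>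
            \<not> int n dvd (int (l - j) * int (n div 2) + Ew ez l - Ew ez j)" by blast
    have "\<not> int n dvd (int (l - j) * int (n div 2) + Ew ez (l + r) - Ew ez (j + r))"
      using W0[rule_format, of "j + r" "l + r"] jl by simp
    moreover have "int (l - j) * int (n div 2) + Ew er l - Ew er j
        = int (l - j) * int (n div 2) + Ew ez (l + r) - Ew ez (j + r)" using sh[of l] sh[of j] by simp
    ultimately show ?thesis by metis
  qed
  have Td: "int n dvd Ew er n"
  proof -
    have "Ew ez (r + n) = Ew ez r + Ew ez n" using Ew_add_period[of ez n r] V by simp
    then have "Ew er n = 0" using sh[of n] V by (simp add: add.commute)
    then show ?thesis by simp
  qed
  define xs where "xs = map (\<lambda>j. (int j * int (n div 2) + Ew er j) mod int n + 1) [0..<n]"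
  have c: "latin_row n xs \<and> dist_ok n xs \<and> xs ! 0 = 1 \<and> ext_diff_row n xs = map er [0..<n]"
    unfolding xs_def by (rule construct[OF n6 ev per eb W Td])
  have "map er [0..<n] = rotate r (zigzag_pattern n)"
  proof (rule nth_equalityI)
    show "length (map er [0..<n]) = length (rotate r (zigzag_pattern n))"
      using zig_len[OF n6 ev] by simp
  next
    fix i assume "i < length (map er [0..<n])"
    then have i: "i < n" by simp
    have "(r + i) mod n < n" using n6 by simp
    then have "zigzag_pattern n ! ((r + i) mod n) = zz n ((r + i) mod n)"
      using zig_nth[OF n6 ev] by simp
    then show "map er [0..<n] ! i = rotate r (zigzag_pattern n) ! i"
      using i zig_len[OF n6 ev] by (simp add: nth_rotate er_def ez_def add.commute)
  qed
  then show ?thesis using c by metis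
qed

lemma const_row:
  fixes n :: nat and c :: int
  assumes n6: "n \<ge> 6" and ev: "even n" and n4: "n mod 4 = 0" and c: "c = 1 \<or> c = -1"
  shows "\<exists>xs. latin_row n xs \<and> dist_ok n xs \<and> xs ! 0 = 1
           \<and> ext_diff_row n xs = replicate n c"
proof -
  obtain H where H: "n = 2 * H" using ev by blast
  have H3: "H \<ge> 3" using H n6 by simp
  have Hev: "even H" using H n4 by presburger
  have cop: "coprime n (nat (int H + c))"
  proof (cases "c = 1")
    case True
    then have "nat (int H + c) = Suc H" by simp
    moreover have "coprime 2 (Suc H)" using Hev by simp
    moreover have "coprime H (Suc H)" by simp
    ultimately show ?thesis using H by simp
  next
    case False
    then have "c = -1" using c by simp
    then have "nat (int H + c) = H - 1" using H3 by simp
    moreover have "coprime 2 (H - 1)" using Hev H3 by simp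
    moreover have "coprime H (H - 1)" by (rule coprime_diff_one_right_nat) (use H3 in simp)
    ultimately show ?thesis using H by simp
  qed
  define e where "e = (\<lambda>_::nat. c)"
  have per: "\<And>i. e (i + n) = e i" by (simp add: e_def)
  have eb: "\<And>i. \<bar>e i\<bar> \<le> 1" using c by (auto simp: e_def)
  have W: "\<And>j l. j < l \<Longrightarrow> l < j + n \<Longrightarrow>
            \<not> int n dvd (int (l - j) * int (n div 2) + Ew e l - Ew e j)"
    unfolding e_def using const_valid[OF n6 H c cop] by blast
  have Td: "int n dvd Ew e n" using Ew_const[of n e c] by (simp add: e_def)
  define xs where "xs = map (\<lambda>j. (int j * int (n div 2) + Ew e j) mod int n + 1) [0..<n]"
  have cc: "latin_row n xs \<and> dist_ok n xs \<and> xs ! 0 = 1 \<and> ext_diff_row n xs = map e [0..<n]"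
    unfolding xs_def by (rule construct[OF n6 ev per eb W Td])
  have "map e [0..<n] = replicate n c" by (simp add: e_def map_replicate_const)
  then show ?thesis using cc by metis
qed

lemma rot_inj:
  fixes n r s :: nat
  assumes n6: "n \<ge> 6" and ev: "even n" and r: "r < n" and s: "s < n"
    and eq: "rotate r (zigzag_pattern n) = rotate s (zigzag_pattern n)"
  shows "r = s"
proof -
  obtain H where H: "n = 2 * H" using ev by blast
  have H3: "H \<ge> 3" using H n6 by simp
  have Hd: "n div 2 = H" using H by simp
  let ?z = "zigzag_pattern n"
  have rv: "rotate t ?z ! i = zz n ((t + i) mod n)" if "i < n" for t i
  proof -
    have "(t + i) mod n < n" using n6 by simp
    then show ?thesis using that zig_len[OF n6 ev] zig_nth[OF n6 ev] by (simp add: nth_rotate)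
  qed
  define i0 where "i0 = (n + (H - 1) - r) mod n"
  define i1 where "i1 = (i0 + 1) mod n"
  have i0n: "i0 < n" "i1 < n" using n6 by (simp_all add: i0_def i1_def)
  have ri0: "(r + i0) mod n = H - 1"
  proof -
    have "(r + i0) mod n = (r + (n + (H - 1) - r)) mod n" unfolding i0_def by (metis mod_add_right_eq)
    also have "r + (n + (H - 1) - r) = n + (H - 1)" using r by simp
    also have "(n + (H - 1)) mod n = (H - 1) mod n" by simp
    also have "(H - 1) mod n = H - 1" using H H3 by simp
    finally show ?thesis .
  qed
  have shift: "(t + i1) mod n = ((t + i0) mod n + 1) mod n" for t
    unfolding i1_def by (metis add.assoc mod_add_left_eq mod_add_right_eq)
  have ri1: "(r + i1) mod n = H" using shift[of r] ri0 H H3 by simp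
  have z0: "zz n (H - 1) = 0" using Hd by (simp add: zz_def)
  have z1: "zz n H = -1"
  proof -
    have "\<not> H < H - 1" "H \<noteq> H - 1" "H < n - 1" using H H3 by arith+
    then show ?thesis using Hd by (simp add: zz_def)
  qed
  define u where "u = (s + i0) mod n"
  have un: "u < n" using n6 by (simp add: u_def)
  have "zz n u = 0" using rv[of i0 s] rv[of i0 r] i0n eq ri0 z0 by (simp add: u_def)
  moreover have "zz n ((u + 1) mod n) = -1"
    using rv[of i1 s] rv[of i1 r] i0n eq ri1 z1 shift[of s] by (simp add: u_def)
  ultimately have "u = H - 1"
  proof -
    assume a: "zz n u = 0" "zz n ((u + 1) mod n) = -1"
    have "u = H - 1 \<or> u = n - 1" using a(1) un Hd by (auto simp: zz_def split: if_splits)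
    moreover have "u \<noteq> n - 1"
    proof
      assume "u = n - 1"
      then have "(u + 1) mod n = 0" using n6 by simp
      then show False using a(2) Hd H3 by (simp add: zz_def)
    qed
    ultimately show ?thesis by blast
  qed
  then have "(s + i0) mod n = (r + i0) mod n" using ri0 u_def by simp
  then have "(int s + int i0) mod int n = (int r + int i0) mod int n"
    by (metis of_nat_add of_nat_mod)
  then have "int n dvd (int s + int i0 - (int r + int i0))" by (simp add: mod_eq_dvd_iff)
  then have "int n dvd (int s - int r)" by simp
  moreover have "\<bar>int s - int r\<bar> < int n" using r s by simp
  ultimately have "int s - int r = 0" using small_ndvd[of "int s - int r" "int n"] by auto
  then show ?thesis by simp
qed

lemma edr_inj:
  fixes xs ys :: "int list" and n :: nat
  assumes n6: "n \<ge> 6" and ev: "even n"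
    and Lx: "latin_row n xs" and Ly: "latin_row n ys"
    and x0: "xs ! 0 = 1" and y0: "ys ! 0 = 1"
    and eq: "ext_diff_row n xs = ext_diff_row n ys"
  shows "xs = ys"
proof -
  have all: "\<forall>i<n. xs ! i = ys ! i"
  proof (intro allI)
    fix i show "i < n \<longrightarrow> xs ! i = ys ! i"
    proof (induction i)
      case 0 then show ?case using x0 y0 by simp
    next
      case (Suc i)
      show ?case
      proof
        assume si: "Suc i < n"
        then have i: "i < n" by simp
        have xi: "xs ! i = ys ! i" using Suc.IH i by simp
        have m: "(i + 1) mod n = Suc i" using si by simp
        have "(xs ! Suc i - xs ! i) mod int n = (ys ! Suc i - ys ! i) mod int n"
          using edr_nth[OF i, of xs] edr_nth[OF i, of ys] eq m by simp
        then have "int n dvd ((xs ! Suc i - xs ! i) - (ys ! Suc i - ys ! i))"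
          by (simp add: mod_eq_dvd_iff)
        then have d: "int n dvd (xs ! Suc i - ys ! Suc i)" using xi by simp
        have "\<bar>xs ! Suc i - ys ! Suc i\<bar> < int n"
          using latin_val[OF Lx si] latin_val[OF Ly si] by (simp add: abs_less_iff)
        then have "xs ! Suc i - ys ! Suc i = 0" using small_ndvd[of "xs ! Suc i - ys ! Suc i" "int n"] d
          by auto
        then show "xs ! Suc i = ys ! Suc i" by simp
      qed
    qed
  qed
  show ?thesis
    by (rule nth_equalityI) (use all Lx Ly in \<open>auto simp: latin_row_def\<close>)
qed

theorem mainTheorem4:
  fixes n :: nat
  assumes "n \<ge> 6" and "even n"
  shows "(\<forall>xs. latin_row n xs \<and> dist_ok n xs \<longrightarrow>
            is_rotation_of (ext_diff_row n xs) (zigzag_pattern n)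
            \<or> ext_diff_row n xs = replicate n 1
            \<or> ext_diff_row n xs = replicate n (-1))
         \<and> card {xs. latin_row n xs \<and> dist_ok n xs \<and> xs ! 0 = 1}
             = (if n mod 4 = 0 then n + 2 else n)"
proof -
  have n6: "n \<ge> 6" and ev: "even n" using assms by auto
  let ?z = "zigzag_pattern n"
  have zl: "length ?z = n" by (rule zig_len[OF n6 ev])
  have P1: "\<forall>xs. latin_row n xs \<and> dist_ok n xs \<longrightarrow>
            is_rotation_of (ext_diff_row n xs) ?z
            \<or> ext_diff_row n xs = replicate n 1
            \<or> ext_diff_row n xs = replicate n (-1)"
    using part1[OF n6 ev] by blast
  define S where "S = {xs. latin_row n xs \<and> dist_ok n xs \<and> xs ! 0 = 1}"
  define R where "R = (\<lambda>r. rotate r ?z) ` {..<n}"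
  define C where "C = (if n mod 4 = 0 then {replicate n (1::int), replicate n (-1)} else {})"
  have inj: "inj_on (ext_diff_row n) S"
    by (rule inj_onI) (use edr_inj[OF n6 ev] in \<open>auto simp: S_def\<close>)
  have img: "ext_diff_row n ` S = R \<union> C"
  proof
    show "ext_diff_row n ` S \<subseteq> R \<union> C"
    proof
      fix d assume "d \<in> ext_diff_row n ` S"
      then obtain xs where xs: "xs \<in> S" "d = ext_diff_row n xs" by blast
      have "is_rotation_of d ?z \<or> (n mod 4 = 0 \<and> d = replicate n 1) \<or> (n mod 4 = 0 \<and> d = replicate n (-1))"
        using part1[OF n6 ev, of xs] xs by (simp add: S_def)
      then show "d \<in> R \<union> C"
      proof (elim disjE)
        assume "is_rotation_of d ?z"
        then obtain k where "d = (rot1 ^^ k) ?z" unfolding is_rotation_of_def by blast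
        then have "d = rotate ((k * (n - 1)) mod n) ?z" using zl
          by (simp add: rot1_pow) (metis rotate_conv_mod)
        moreover have "(k * (n - 1)) mod n < n" using n6 by simp
        ultimately show ?thesis unfolding R_def by blast
      qed (auto simp: C_def)
    qed
  next
    show "R \<union> C \<subseteq> ext_diff_row n ` S"
    proof
      fix d assume "d \<in> R \<union> C"
      then consider (r) r where "r < n" "d = rotate r ?z" | (c) c where "n mod 4 = 0" "c = 1 \<or> c = -1" "d = replicate n c"
        unfolding R_def C_def by (auto split: if_splits)
      then show "d \<in> ext_diff_row n ` S"
      proof cases
        case r
        then obtain xs where "latin_row n xs \<and> dist_ok n xs \<and> xs ! 0 = 1 \<and> ext_diff_row n xs = d"
          using rot_row[OF n6 ev, of r] by blast
        then show ?thesis unfolding S_def by force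
      next
        case c
        then obtain xs where "latin_row n xs \<and> dist_ok n xs \<and> xs ! 0 = 1 \<and> ext_diff_row n xs = d"
          using const_row[OF n6 ev c(1) c(2)] c(3) by blast
        then show ?thesis unfolding S_def by force
      qed
    qed
  qed
  have cS: "card S = card (R \<union> C)" using card_image[OF inj] img by simp
  have cR: "card R = n"
  proof -
    have "inj_on (\<lambda>r. rotate r ?z) {..<n}"
      by (rule inj_onI) (use rot_inj[OF n6 ev] in auto)
    then show ?thesis unfolding R_def by (simp add: card_image)
  qed
  have z0: "0 \<in> set ?z"
  proof -
    obtain H where H: "n = 2 * H" using ev by blast
    have "H - 1 < n" using H n6 by simp
    then have "?z ! (H - 1) = zz n (H - 1)" using zig_nth[OF n6 ev, of "H - 1"] by simp
    moreover have "zz n (H - 1) = 0" using H by (simp add: zz_def)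
    moreover have "H - 1 < length ?z" using zl H n6 by simp
    ultimately show ?thesis by (metis nth_mem)
  qed
  have disj: "R \<inter> C = {}"
  proof -
    have "0 \<in> set d" if "d \<in> R" for d using that z0 unfolding R_def by auto
    moreover have "0 \<notin> set d" if "d \<in> C" for d using that n6 unfolding C_def by (auto split: if_splits)
    ultimately show ?thesis by blast
  qed
  have cC: "card C = (if n mod 4 = 0 then 2 else 0)"
  proof -
    have "replicate n (1::int) \<noteq> replicate n (-1)" using n6 by (cases n) auto
    then show ?thesis unfolding C_def by auto
  qed
  have "card (R \<union> C) = card R + card C"
    by (rule card_Un_disjoint) (use disj in \<open>auto simp: R_def C_def\<close>)
  then have "card S = (if n mod 4 = 0 then n + 2 else n)" using cS cR cC by simp
  then show ?thesis using P1 unfolding S_def by blast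
qed

end
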